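(* Let $n\ge2$. For $j=1,\dots,n-1$ let $M_j$ be the $2\times 2$ matrix of the $j$-th component of $x\in X^1$, and put $\delta_j=\det M_j$, $t_j=\tfrac12\operatorname{tr}(M_j^tM_j)$, define $a_j,b_j$ by $M_j^tM_j-t_jI=\begin{pmatrix}a_j&b_j\\ b_j&-a_j\end{pmatrix}$, and put $w_j^{+}=\tfrac12(a_j-ib_j)$, $w_j^-=\tfrac12(a_j+ib_j)$, $u_{1j}=4w_1^+w_j^-$, and $\tilde u_j=u_{1j}/(\delta_1^2-t_1^2)$ for $j=2,\dots,n-1$. Then the $3n-4$ functions $t_1,\dots,t_{n-1},\delta_1,\dots,\delta_{n-1},\tilde u_2,\dots,\tilde u_{n-1}$ are $W'$-invariant, algebraically independent, and generate $\mathbb C(X^1)^{W'}$; that is, $\operatorname{Spec}(\mathbb C[t_\bullet,\delta_\bullet,\tilde u_\bullet]_\Delta)$ with $\Delta=\prod_{i=1}^{n-1}\delta_i(\delta_i^2-t_i^2)$ is a rational quotient for the action of $W'$ on $X^1$. In particular $\mathbb C(X^1)^{W'}$ is purely transcendental over $\mathbb C$ of degree $3n-4$.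
   Context: Let $U_1,\dots,U_n$ be two-dimensional complex vector spaces (the transversal planes $\mathscr V_i^t$), each with a nondegenerate symmetric bilinear form and a chosen orthonormal basis, so $U_i\cong\mathbb C^2$ with the standard form and $\mathrm{SO}(U_i)\cong\mathrm{SO}_2(\mathbb C)$. Let $X^1=\bigoplus_{j=1}^{n-1}U_j\otimes U_n$, and identify each $U_j\otimes U_n$ with $M_2(\mathbb C)$ by sending $\sum_{a,b}c_{ab}f^{(j)}_a\otimes f^{(n)}_b$ to $(c_{ab})$, where $f^{(i)}_1,f^{(i)}_2$ is the orthonormal basis of $U_i$. The group $N'=\prod_{i=1}^n\mathrm{SO}(U_i)$ acts on $X^1$ by $g_j\otimes g_n$ on the $j$-th summand, i.e. $M_j\mapsto g_jM_jg_n^{-1}$; the element $(-I,\dots,-I)$ acts trivially, and $W'=N'/\{\pm(I,\dots,I)\}$. For a group acting on a variety, a rational quotient is a variety whose function field is isomorphic to the field of invariant rational functions. *)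

theory Defs
  imports "HOL-Analysis.Analysis"
begin

type_synonym mat2 = "complex^2^2"
type_synonym ptX = "nat \<Rightarrow> mat2"  (* component j (1 \<le> j \<le> n-1) is M_j; other components unused *)

text \<open>Polynomial functions generated by a set of coordinate functions
  (over the infinite field C, polynomial functions = polynomials).\<close>
inductive_set polyfun :: "('p \<Rightarrow> complex) set \<Rightarrow> ('p \<Rightarrow> complex) set"
  for C :: "('p \<Rightarrow> complex) set" where
  pf_const: "(\<lambda>x. c) \<in> polyfun C"
| pf_coord: "f \<in> C \<Longrightarrow> f \<in> polyfun C"
| pf_add: "f \<in> polyfun C \<Longrightarrow> g \<in> polyfun C \<Longrightarrow> (\<lambda>x. f x + g x) \<in> polyfun C"
| pf_mult: "f \<in> polyfun C \<Longrightarrow> g \<in> polyfun C \<Longrightarrow> (\<lambda>x. f x * g x) \<in> polyfun C"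

definition coordsX :: "nat \<Rightarrow> (ptX \<Rightarrow> complex) set" where
  "coordsX n = {(\<lambda>x. x j $ a $ b) | j a b. j \<in> {1..n-1}}"

definition coordsC :: "nat \<Rightarrow> ((nat \<Rightarrow> complex) \<Rightarrow> complex) set" where
  "coordsC N = {(\<lambda>y. y k) | k. k < N}"

definition SO2 :: "mat2 set" where
  "SO2 = {g. transpose g ** g = mat 1 \<and> det g = 1}"

definition Nprime :: "nat \<Rightarrow> (nat \<Rightarrow> mat2) set" where
  "Nprime n = {g. \<forall>i\<in>{1..n}. g i \<in> SO2}"

definition actX :: "nat \<Rightarrow> (nat \<Rightarrow> mat2) \<Rightarrow> ptX \<Rightarrow> ptX" where
  "actX n g x = (\<lambda>j. if j \<in> {1..n-1} then g j ** x j ** matrix_inv (g n) else x j)"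

definition delta :: "ptX \<Rightarrow> nat \<Rightarrow> complex" where
  "delta x j = det (x j)"

definition tt :: "ptX \<Rightarrow> nat \<Rightarrow> complex" where
  "tt x j = (1/2) * trace (transpose (x j) ** x j)"

definition SM :: "ptX \<Rightarrow> nat \<Rightarrow> mat2" where
  "SM x j = transpose (x j) ** x j - mat (tt x j)"

(* M_j^t M_j - t_j I = [[a_j, b_j],[b_j, -a_j]] *)
definition aa :: "ptX \<Rightarrow> nat \<Rightarrow> complex" where
  "aa x j = SM x j $ 1 $ 1"

definition bb :: "ptX \<Rightarrow> nat \<Rightarrow> complex" where
  "bb x j = SM x j $ 1 $ 2"

definition wp :: "ptX \<Rightarrow> nat \<Rightarrow> complex" where
  "wp x j = (1/2) * (aa x j - \<i> * bb x j)"

definition wm :: "ptX \<Rightarrow> nat \<Rightarrow> complex" where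
  "wm x j = (1/2) * (aa x j + \<i> * bb x j)"

definition u1 :: "ptX \<Rightarrow> nat \<Rightarrow> complex" where
  "u1 x j = 4 * wp x 1 * wm x j"

definition Dd :: "ptX \<Rightarrow> complex" where
  "Dd x = (delta x 1)^2 - (tt x 1)^2"

definition ut :: "ptX \<Rightarrow> nat \<Rightarrow> complex" where
  "ut x j = u1 x j / Dd x"

definition Phi :: "nat \<Rightarrow> ptX \<Rightarrow> nat \<Rightarrow> complex" where
  "Phi n x k =
     (if k < n - 1 then tt x (k + 1)
      else if k < 2*n - 2 then delta x (k - (n - 1) + 1)
      else if k < 3*n - 4 then ut x (k - (2*n - 2) + 2)
      else 0)"

end

theory Submission
  imports Defs "HOL-Computational_Algebra.Polynomial"
begin


definition isoA :: "mat2 \<Rightarrow> complex" where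
  "isoA M = M$1$1 + \<i>*M$1$2 + \<i>*M$2$1 - M$2$2"
definition isoB :: "mat2 \<Rightarrow> complex" where
  "isoB M = M$1$1 - \<i>*M$1$2 + \<i>*M$2$1 + M$2$2"
definition isoC :: "mat2 \<Rightarrow> complex" where
  "isoC M = M$1$1 + \<i>*M$1$2 - \<i>*M$2$1 + M$2$2"
definition isoE :: "mat2 \<Rightarrow> complex" where
  "isoE M = M$1$1 - \<i>*M$1$2 - \<i>*M$2$1 - M$2$2"

definition m2 :: "complex \<Rightarrow> complex \<Rightarrow> complex \<Rightarrow> complex \<Rightarrow> mat2" where
  "m2 a b c d = (\<chi> i j. if i = 1 then (if j = 1 then a else b) else (if j = 1 then c else d))"

lemma m2_simps[simp]: "m2 a b c d $ 1 $ 1 = a" "m2 a b c d $ 1 $ 2 = b"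
  "m2 a b c d $ 2 $ 1 = c" "m2 a b c d $ 2 $ 2 = d"
  by (simp_all add: m2_def)

lemma mat2_eta: "(M::mat2) = m2 (M$1$1) (M$1$2) (M$2$1) (M$2$2)"
  by (simp add: vec_eq_iff forall_2)

lemma m2_eq_iff: "m2 a b c d = m2 a' b' c' d' \<longleftrightarrow> a = a' \<and> b = b' \<and> c = c' \<and> d = d'"
  by (simp add: vec_eq_iff forall_2 m2_def)

lemma m2_mult: "m2 a b c d ** m2 a' b' c' d' = m2 (a*a'+b*c') (a*b'+b*d') (c*a'+d*c') (c*b'+d*d')"
  by (simp add: vec_eq_iff forall_2 matrix_matrix_mult_def sum_2)

lemma m2_transpose: "transpose (m2 a b c d) = m2 a c b d"
  by (simp add: vec_eq_iff forall_2 transpose_def)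

lemma m2_det: "det (m2 a b c d) = a*d - b*c"
  by (simp add: det_2)

lemma m2_trace: "trace (m2 a b c d) = a + d"
  by (simp add: trace_def sum_2)

lemma m2_mat: "mat k = m2 k 0 0 k"
  by (simp add: vec_eq_iff forall_2 mat_def)

lemma m2_minus: "m2 a b c d - m2 a' b' c' d' = m2 (a-a') (b-b') (c-c') (d-d')"
  by (simp add: vec_eq_iff forall_2)

definition fromIso :: "complex \<Rightarrow> complex \<Rightarrow> complex \<Rightarrow> complex \<Rightarrow> mat2" where
  "fromIso A B C E = m2 ((A+B+C+E)/4) ((A-B+C-E)/(4*\<i>)) ((A+B-C-E)/(4*\<i>)) ((-A+B+C-E)/4)"

lemma iso_m2: "isoA (m2 a b c d) = a + \<i>*b + \<i>*c - d"
  "isoB (m2 a b c d) = a - \<i>*b + \<i>*c + d"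
  "isoC (m2 a b c d) = a + \<i>*b - \<i>*c + d"
  "isoE (m2 a b c d) = a - \<i>*b - \<i>*c - d"
  by (simp_all add: isoA_def isoB_def isoC_def isoE_def)

lemma iso_fromIso: "isoA (fromIso A B C E) = A" "isoB (fromIso A B C E) = B"
  "isoC (fromIso A B C E) = C" "isoE (fromIso A B C E) = E"
  by (simp_all add: fromIso_def iso_m2 field_simps)

lemma fromIso_iso: "fromIso (isoA M) (isoB M) (isoC M) (isoE M) = M"
proof -
  have "fromIso (isoA M) (isoB M) (isoC M) (isoE M) = m2 (M$1$1) (M$1$2) (M$2$1) (M$2$2)"
    by (simp add: fromIso_def m2_eq_iff isoA_def isoB_def isoC_def isoE_def field_simps)
  thus ?thesis using mat2_eta[of M] by simp
qed

lemma iso_eq: "(M::mat2) = N \<longleftrightarrow> isoA M = isoA N \<and> isoB M = isoB N \<and> isoC M = isoC N \<and> isoE M = isoE N"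
  by (metis fromIso_iso)

lemma tt_iso: "tt x j = (isoB (x j) * isoC (x j) + isoA (x j) * isoE (x j))/4"
proof -
  obtain a b c d where e: "x j = m2 a b c d" using mat2_eta by blast
  show ?thesis unfolding tt_def e m2_transpose m2_mult m2_trace iso_m2
    by (simp add: field_simps power2_eq_square)
qed

lemma delta_iso: "delta x j = (isoB (x j) * isoC (x j) - isoA (x j) * isoE (x j))/4"
proof -
  obtain a b c d where e: "x j = m2 a b c d" using mat2_eta by blast
  show ?thesis unfolding delta_def e m2_det iso_m2
    by (simp add: field_simps power2_eq_square)
qed

lemma wp_iso: "wp x j = isoB (x j) * isoE (x j)/4"
proof -
  obtain a b c d where e: "x j = m2 a b c d" using mat2_eta by blast
  show ?thesis unfolding wp_def aa_def bb_def SM_def tt_def e m2_transpose m2_mult m2_trace iso_m2 m2_mat m2_minus m2_simps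
    by (simp add: field_simps power2_eq_square)
qed

lemma wm_iso: "wm x j = isoA (x j) * isoC (x j)/4"
proof -
  obtain a b c d where e: "x j = m2 a b c d" using mat2_eta by blast
  show ?thesis unfolding wm_def aa_def bb_def SM_def tt_def e m2_transpose m2_mult m2_trace iso_m2 m2_mat m2_minus m2_simps
    by (simp add: field_simps power2_eq_square)
qed

definition rot :: "complex \<Rightarrow> mat2" where
  "rot l = m2 ((l + 1/l)/2) (-((l - 1/l)/(2*\<i>))) ((l - 1/l)/(2*\<i>)) ((l + 1/l)/2)"

lemma rot_mult: "a \<noteq> 0 \<Longrightarrow> b \<noteq> 0 \<Longrightarrow> rot a ** rot b = rot (a*b)"
  unfolding rot_def m2_mult m2_eq_iff by (simp add: field_simps power2_eq_square)

lemma rot_1: "rot 1 = mat 1"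
  unfolding rot_def m2_mat m2_eq_iff by simp

lemma rot_transpose: "a \<noteq> 0 \<Longrightarrow> transpose (rot a) = rot (1/a)"
  unfolding rot_def m2_transpose m2_eq_iff by (simp add: field_simps)

lemma rot_SO2: "l \<noteq> 0 \<Longrightarrow> rot l \<in> SO2"
  unfolding SO2_def by (simp add: rot_transpose rot_mult rot_1 del: One_nat_def) (simp add: rot_def m2_det field_simps power2_eq_square)

lemma SO2_rot: assumes "g \<in> SO2" shows "\<exists>l. l \<noteq> 0 \<and> g = rot l"
proof -
  obtain a b c d where e: "g = m2 a b c d" using mat2_eta by blast
  have h: "a*a + c*c = 1" "a*b + c*d = 0" "b*b+d*d = 1" "a*d - b*c = 1"
    using assms unfolding SO2_def e by (simp_all add: m2_transpose m2_mult m2_mat m2_det m2_eq_iff)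
  have d: "d = a"
  proof -
    have "d = d*(a*d - b*c)" using h by simp
    also have "\<dots> = a*(b*b+d*d)" using h(2) by algebra
    finally show ?thesis using h by simp
  qed
  have b: "b = -c"
  proof -
    have "b = b*(a*d - b*c)" using h by simp
    also have "\<dots> = -c*(b*b+d*d)" using h(2) by algebra
    finally show ?thesis using h by simp
  qed
  have l: "(a + \<i>*c) * (a - \<i>*c) = 1" using h by (simp add: algebra_simps)
  hence nz: "a + \<i>*c \<noteq> 0" by auto
  have inv: "1/(a + \<i>*c) = a - \<i>*c" using l nz by (simp add: field_simps)
  have "g = rot (a + \<i>*c)" unfolding e rot_def inv d b m2_eq_iff by (simp add: field_simps)
  thus ?thesis using nz by blast
qed



lemma matrix_inv_rot: assumes "l \<noteq> 0" shows "matrix_inv (rot l) = rot (1/l)"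
proof -
  have h: "rot l ** rot (1/l) = mat 1 \<and> rot (1/l) ** rot l = mat 1"
    using assms by (simp add: rot_mult rot_1 del: One_nat_def)
  define B where "B = matrix_inv (rot l)"
  have "rot l ** B = mat 1 \<and> B ** rot l = mat 1"
    unfolding B_def matrix_inv_def by (rule someI[of _ "rot (1/l)"]) (rule h)
  hence "(B ** rot l) ** rot (1/l) = rot (1/l)" by simp
  moreover have "(B ** rot l) ** rot (1/l) = B ** (rot l ** rot (1/l))" by (simp add: matrix_mul_assoc)
  ultimately show ?thesis using h unfolding B_def by simp
qed

lemma iso_rot_left: assumes "l \<noteq> 0" shows
  "isoA (rot l ** M) = l * isoA M" "isoB (rot l ** M) = l * isoB M"
  "isoC (rot l ** M) = isoC M / l" "isoE (rot l ** M) = isoE M / l"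
proof -
  obtain a b c d where e: "M = m2 a b c d" using mat2_eta by blast
  show "isoA (rot l ** M) = l * isoA M" "isoB (rot l ** M) = l * isoB M"
    "isoC (rot l ** M) = isoC M / l" "isoE (rot l ** M) = isoE M / l"
    unfolding e rot_def m2_mult iso_m2 using assms by (simp_all add: field_simps)
qed

lemma iso_rot_right: assumes "l \<noteq> 0" shows
  "isoA (M ** rot l) = isoA M / l" "isoB (M ** rot l) = l * isoB M"
  "isoC (M ** rot l) = isoC M / l" "isoE (M ** rot l) = l * isoE M"
proof -
  obtain a b c d where e: "M = m2 a b c d" using mat2_eta by blast
  show "isoA (M ** rot l) = isoA M / l" "isoB (M ** rot l) = l * isoB M"
    "isoC (M ** rot l) = isoC M / l" "isoE (M ** rot l) = l * isoE M"
    unfolding e rot_def m2_mult iso_m2 using assms by (simp_all add: field_simps)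
qed

lemma iso_act: assumes "l \<noteq> 0" "m \<noteq> 0" shows
  "isoA (rot l ** M ** matrix_inv (rot m)) = l * m * isoA M"
  "isoB (rot l ** M ** matrix_inv (rot m)) = l / m * isoB M"
  "isoC (rot l ** M ** matrix_inv (rot m)) = m / l * isoC M"
  "isoE (rot l ** M ** matrix_inv (rot m)) = isoE M / (l * m)"
  using assms by (simp_all add: matrix_inv_rot iso_rot_left iso_rot_right field_simps)

lemma Nprime_rot: assumes "g \<in> Nprime n" "i \<in> {1..n}" shows "\<exists>l. l \<noteq> 0 \<and> g i = rot l"
  using assms SO2_rot unfolding Nprime_def by blast

lemma actX_in: "j \<in> {1..n-1} \<Longrightarrow> actX n g x j = g j ** x j ** matrix_inv (g n)"
  unfolding actX_def by simp

lemma inv_part1: assumes "g \<in> Nprime n" "j \<in> {1..n-1}"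
  shows "tt (actX n g x) j = tt x j \<and> delta (actX n g x) j = delta x j"
proof -
  have jn: "j \<in> {1..n}" "n \<in> {1..n}" using assms(2) by auto
  obtain l where l: "l \<noteq> 0" "g j = rot l" using Nprime_rot[OF assms(1) jn(1)] by auto
  obtain m where m: "m \<noteq> 0" "g n = rot m" using Nprime_rot[OF assms(1) jn(2)] by auto
  show ?thesis unfolding tt_iso delta_iso actX_in[OF assms(2)] l m iso_act[OF l(1) m(1)]
    using l m by (simp add: field_simps)
qed

lemma inv_part2: assumes "g \<in> Nprime n" "j \<in> {2..n-1}"
  shows "ut (actX n g x) j = ut x j"
proof -
  have j1: "j \<in> {1..n-1}" and o: "1 \<in> {1..n-1}" using assms(2) by auto
  have jn: "j \<in> {1..n}" "n \<in> {1..n}" "1 \<in> {1..n}" using assms(2) by auto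
  obtain l where l: "l \<noteq> 0" "g j = rot l" using Nprime_rot[OF assms(1) jn(1)] by auto
  obtain l1 where l1: "l1 \<noteq> 0" "g 1 = rot l1" using Nprime_rot[OF assms(1) jn(3)] by auto
  obtain m where m: "m \<noteq> 0" "g n = rot m" using Nprime_rot[OF assms(1) jn(2)] by auto
  have "Dd (actX n g x) = Dd x" unfolding Dd_def using inv_part1[OF assms(1) o] by simp
  moreover have "u1 (actX n g x) j = u1 x j"
    unfolding u1_def wp_iso wm_iso actX_in[OF j1] actX_in[OF o] l l1 m
      iso_act[OF l(1) m(1)] iso_act[OF l1(1) m(1)]
    using l l1 m by (simp add: field_simps)
  ultimately show ?thesis unfolding ut_def by simp
qed



lemma polyfun_local: "f \<in> polyfun C \<Longrightarrow> (\<forall>c\<in>C. c y = c y') \<Longrightarrow> f y = f y'"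
  by (induction f rule: polyfun.induct) auto

lemma polyfun_line: assumes "\<forall>c\<in>C. \<exists>p. \<forall>s. c (L s) = poly p s" "f \<in> polyfun C"
  shows "\<exists>p. \<forall>s. f (L s) = poly p s"
  using assms(2)
proof (induction f rule: polyfun.induct)
  case (pf_const c) then show ?case by (intro exI[of _ "[:c:]"]) simp
next
  case (pf_coord f) then show ?case using assms(1) by blast
next
  case (pf_add f g) then obtain p q where "\<forall>s. f (L s) = poly p s" "\<forall>s. g (L s) = poly q s" by blast
  then show ?case by (intro exI[of _ "p + q"]) simp
next
  case (pf_mult f g) then obtain p q where "\<forall>s. f (L s) = poly p s" "\<forall>s. g (L s) = poly q s" by blast
  then show ?case by (intro exI[of _ "p * q"]) simp
qed

lemma pf_cmult: "f \<in> polyfun C \<Longrightarrow> (\<lambda>x. c * f x) \<in> polyfun C"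
  using pf_mult[OF pf_const] by blast

lemma pf_diff: "f \<in> polyfun C \<Longrightarrow> g \<in> polyfun C \<Longrightarrow> (\<lambda>x. f x - g x) \<in> polyfun C"
proof -
  assume "f \<in> polyfun C" "g \<in> polyfun C"
  hence "(\<lambda>x. f x + (-1) * g x) \<in> polyfun C" by (intro pf_add pf_cmult)
  thus ?thesis by simp
qed

lemma pf_power: "f \<in> polyfun C \<Longrightarrow> (\<lambda>x. f x ^ k) \<in> polyfun C"
  by (induction k) (auto intro: pf_const pf_mult)

lemma pf_prod: "finite I \<Longrightarrow> (\<And>i. i \<in> I \<Longrightarrow> f i \<in> polyfun C) \<Longrightarrow> (\<lambda>x. \<Prod>i\<in>I. f i x) \<in> polyfun C"
  by (induction I rule: finite_induct) (auto intro: pf_const pf_mult)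

lemma pf_sum: "finite I \<Longrightarrow> (\<And>i. i \<in> I \<Longrightarrow> f i \<in> polyfun C) \<Longrightarrow> (\<lambda>x. \<Sum>i\<in>I. f i x) \<in> polyfun C"
  by (induction I rule: finite_induct) (auto intro: pf_const pf_add)

lemma two_poly_nonzero:
  fixes p q :: "complex poly"
  assumes "p \<noteq> 0" "q \<noteq> 0" shows "\<exists>s. poly p s \<noteq> 0 \<and> poly q s \<noteq> 0"
proof -
  have "finite ({s. poly p s = 0} \<union> {s. poly q s = 0})"
    using poly_roots_finite assms by blast
  hence "{s. poly p s = 0} \<union> {s. poly q s = 0} \<noteq> UNIV" using infinite_UNIV_char_0 by metis
  thus ?thesis by auto
qed

lemma poly_zero_cofinite:
  fixes p q :: "complex poly"
  assumes "q \<noteq> 0" "\<And>s. poly q s \<noteq> 0 \<Longrightarrow> poly p s = 0" shows "p = 0"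
proof (rule ccontr)
  assume "p \<noteq> 0"
  then obtain s where "poly p s \<noteq> 0" "poly q s \<noteq> 0" using two_poly_nonzero assms(1) by blast
  thus False using assms(2) by blast
qed

lemma coordsC_line: "\<forall>c\<in>coordsC N. \<exists>p. \<forall>s. c (\<lambda>k. a k + s * v k) = poly p s"
proof
  fix c assume "c \<in> coordsC N"
  then obtain k where "c = (\<lambda>y. y k)" unfolding coordsC_def by blast
  thus "\<exists>p. \<forall>s. c (\<lambda>k. a k + s * v k) = poly p s"
    by (intro exI[of _ "[:a k, v k:]"]) (simp add: algebra_simps)
qed

lemma coordsX_line: "\<forall>c\<in>coordsX n. \<exists>p. \<forall>s. c (\<lambda>j. \<chi> a b. x0 j $ a $ b + s * (x1 j $ a $ b - x0 j $ a $ b)) = poly p s"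
proof
  fix c assume "c \<in> coordsX n"
  then obtain j a b where "c = (\<lambda>x. x j $ a $ b)" unfolding coordsX_def by blast
  thus "\<exists>p. \<forall>s. c (\<lambda>j. \<chi> a b. x0 j $ a $ b + s * (x1 j $ a $ b - x0 j $ a $ b)) = poly p s"
    by (intro exI[of _ "[:x0 j $ a $ b, x1 j $ a $ b - x0 j $ a $ b:]"]) (simp add: algebra_simps)
qed

lemma polyfunC_zero:
  assumes P: "P \<in> polyfun (coordsC N)" and G: "G \<in> polyfun (coordsC N)"
    and y1: "G y1 \<noteq> 0" and van: "\<And>y. G y \<noteq> 0 \<Longrightarrow> P y = 0"
  shows "P y = 0"
proof -
  define L where "L = (\<lambda>s::complex. \<lambda>k. y1 k + s * (y k - y1 k))"
  obtain p where p: "\<And>s. P (L s) = poly p s" using polyfun_line[OF coordsC_line[of N y1 "\<lambda>k. y k - y1 k"] P] unfolding L_def by blast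
  obtain q where q: "\<And>s. G (L s) = poly q s" using polyfun_line[OF coordsC_line[of N y1 "\<lambda>k. y k - y1 k"] G] unfolding L_def by blast
  have "L 0 = y1" "L 1 = y" unfolding L_def by auto
  hence "q \<noteq> 0" using q[of 0] y1 by auto
  hence "p = 0" by (rule poly_zero_cofinite) (use p q van in metis)
  thus ?thesis using p[of 1] \<open>L 1 = y\<close> by simp
qed

lemma polyfunX_both_nonzero:
  assumes q: "q \<in> polyfun (coordsX n)" and r: "r \<in> polyfun (coordsX n)"
    and "q x0 \<noteq> 0" "r x1 \<noteq> 0"
  shows "\<exists>x. q x \<noteq> 0 \<and> r x \<noteq> 0"
proof -
  define L where "L = (\<lambda>s::complex. \<lambda>j. \<chi> a b. x0 j $ a $ b + s * (x1 j $ a $ b - x0 j $ a $ b))"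
  obtain p1 where p1: "\<And>s. q (L s) = poly p1 s" using polyfun_line[OF coordsX_line[of n x0 x1] q] unfolding L_def by blast
  obtain p2 where p2: "\<And>s. r (L s) = poly p2 s" using polyfun_line[OF coordsX_line[of n x0 x1] r] unfolding L_def by blast
  have "L 0 = x0" "L 1 = x1" unfolding L_def by (auto simp: vec_eq_iff)
  hence "p1 \<noteq> 0" "p2 \<noteq> 0" using p1[of 0] p2[of 1] assms by auto
  then obtain s where "poly p1 s \<noteq> 0" "poly p2 s \<noteq> 0" using two_poly_nonzero by blast
  thus ?thesis using p1 p2 by metis
qed



lemma Dd_iso: "Dd x = -(isoA (x 1) * isoE (x 1)) * (isoB (x 1) * isoC (x 1)) / 4"
  unfolding Dd_def tt_iso delta_iso by (simp add: field_simps power2_eq_square)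

lemma ut_iso: assumes "Dd x \<noteq> 0" shows "ut x j = - (isoA (x j) * isoC (x j)) / (isoA (x 1) * isoC (x 1))"
proof -
  have nz: "isoA (x 1) \<noteq> 0" "isoB (x 1) \<noteq> 0" "isoC (x 1) \<noteq> 0" "isoE (x 1) \<noteq> 0"
    using assms unfolding Dd_iso by auto
  show ?thesis unfolding ut_def u1_def wp_iso wm_iso Dd_iso using nz by (simp add: field_simps)
qed

lemma Phi_t: "j \<in> {1..n-1} \<Longrightarrow> Phi n x (j-1) = tt x j"
  unfolding Phi_def by auto
lemma Phi_d: "j \<in> {1..n-1} \<Longrightarrow> Phi n x (n+j-2) = delta x j"
  unfolding Phi_def by auto
lemma Phi_u: assumes "j \<in> {2..n-1}" shows "Phi n x (2*n+j-4) = ut x j"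
proof -
  have e: "2*n+j-4 - (2*n-2) + 2 = j" using assms by auto
  show ?thesis using assms unfolding Phi_def e by auto
qed

definition Uf :: "nat \<Rightarrow> (nat \<Rightarrow> complex) \<Rightarrow> nat \<Rightarrow> complex" where
  "Uf n y j = (if j = 1 then -1 else y (2*n+j-4))"
definition invU :: "nat \<Rightarrow> (nat \<Rightarrow> complex) \<Rightarrow> nat \<Rightarrow> complex" where
  "invU n y j = (if j = 1 then -1 else 1 / y (2*n+j-4))"
definition sig :: "nat \<Rightarrow> (nat \<Rightarrow> complex) \<Rightarrow> ptX" where
  "sig n y j = (if j \<in> {1..n-1} then
      fromIso 1 (-2*(y (j-1) + y (n+j-2)) * invU n y j) (- Uf n y j) (2*(y (j-1) - y (n+j-2))) else 0)"

lemma sig_iso: assumes "j \<in> {1..n-1}" shows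
  "isoA (sig n y j) = 1" "isoB (sig n y j) = -2*(y (j-1) + y (n+j-2)) * invU n y j"
  "isoC (sig n y j) = - Uf n y j" "isoE (sig n y j) = 2*(y (j-1) - y (n+j-2))"
  using assms by (simp_all add: sig_def iso_fromIso)

lemma sig_good:
  assumes n: "n \<ge> 2" and d: "y (n-1) ^ 2 \<noteq> y 0 ^ 2" and u: "\<forall>j\<in>{2..n-1}. y (2*n+j-4) \<noteq> 0"
  shows "Dd (sig n y) \<noteq> 0" "\<forall>k < 3*n-4. Phi n (sig n y) k = y k"
proof -
  have o: "1 \<in> {1..n-1}" using n by auto
  have UI: "Uf n y j * invU n y j = 1" if "j \<in> {1..n-1}" for j
    using u that by (cases "j = 1") (auto simp: Uf_def invU_def)
  have tt: "tt (sig n y) j = y (j-1)" and dl: "delta (sig n y) j = y (n+j-2)" if j: "j \<in> {1..n-1}" for j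
  proof -
    have e1: "isoB (sig n y j) * isoC (sig n y j) = 2*(y (j-1) + y (n+j-2)) * (Uf n y j * invU n y j)"
      unfolding sig_iso[OF j] by (simp add: algebra_simps)
    have bc: "isoB (sig n y j) * isoC (sig n y j) = 2*(y (j-1) + y (n+j-2))" by (metis e1 UI[OF j] mult_1_right)
    show "tt (sig n y) j = y (j-1)" unfolding tt_iso bc unfolding sig_iso[OF j] by (simp add: field_simps)
    show "delta (sig n y) j = y (n+j-2)" unfolding delta_iso bc unfolding sig_iso[OF j] by (simp add: field_simps)
  qed
  have Dd: "Dd (sig n y) = y (n-1) ^ 2 - y 0 ^ 2" unfolding Dd_def using tt[OF o] dl[OF o] by simp
  thus "Dd (sig n y) \<noteq> 0" using d by simp
  have ut: "ut (sig n y) j = y (2*n+j-4)" if j: "j \<in> {2..n-1}" for j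
  proof -
    have j1: "j \<in> {1..n-1}" and jn1: "j \<noteq> 1" using j by auto
    have "ut (sig n y) j = - (isoA (sig n y j) * isoC (sig n y j)) / (isoA (sig n y 1) * isoC (sig n y 1))"
      using ut_iso \<open>Dd (sig n y) \<noteq> 0\<close> by blast
    also have "\<dots> = y (2*n+j-4)" unfolding sig_iso[OF j1] sig_iso[OF o] using jn1 by (simp add: Uf_def)
    finally show ?thesis .
  qed
  show "\<forall>k < 3*n-4. Phi n (sig n y) k = y k"
  proof (intro allI impI)
    fix k assume k: "k < 3*n-4"
    consider "k < n-1" | "n-1 \<le> k \<and> k < 2*n-2" | "2*n-2 \<le> k" by linarith
    thus "Phi n (sig n y) k = y k"
    proof cases
      case 1
      have j: "k+1 \<in> {1..n-1}" using 1 by auto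
      have e: "k+1-1 = k" by simp
      show ?thesis using tt[OF j] Phi_t[OF j, of "sig n y"] unfolding e by simp
    next
      case 2
      have j: "k-(n-1)+1 \<in> {1..n-1}" using 2 n by auto
      have e: "n + (k-(n-1)+1) - 2 = k" using 2 n by auto
      show ?thesis using dl[OF j] Phi_d[OF j, of "sig n y"] unfolding e by simp
    next
      case 3
      have j: "k-(2*n-2)+2 \<in> {2..n-1}" using 3 k n by auto
      have e: "2*n + (k-(2*n-2)+2) - 4 = k" using 3 n by auto
      show ?thesis using ut[OF j] Phi_u[OF j, of "sig n y"] unfolding e by simp
    qed
  qed
qed

lemma normal_form:
  assumes n: "n \<ge> 2" and D: "Dd x \<noteq> 0" and u: "\<forall>j\<in>{2..n-1}. ut x j \<noteq> 0"
  shows "\<exists>g\<in>Nprime n. \<forall>j\<in>{1..n-1}. actX n g x j = sig n (Phi n x) j"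
proof -
  let ?A = "\<lambda>j. isoA (x j)" and ?B = "\<lambda>j. isoB (x j)" and ?C = "\<lambda>j. isoC (x j)" and ?E = "\<lambda>j. isoE (x j)"
  have nz1: "?A 1 \<noteq> 0" "?B 1 \<noteq> 0" "?C 1 \<noteq> 0" "?E 1 \<noteq> 0"
    using D unfolding Dd_iso by auto
  have nzj: "?A j \<noteq> 0 \<and> ?C j \<noteq> 0" if "j \<in> {1..n-1}" for j
  proof (cases "j = 1")
    case True thus ?thesis using nz1 by simp
  next
    case False hence "j \<in> {2..n-1}" using that by auto
    hence "ut x j \<noteq> 0" using u by blast
    thus ?thesis unfolding ut_iso[OF D] by auto
  qed
  define m where "m = csqrt (1 / (?A 1 * ?C 1))"
  have m2: "m^2 = 1 / (?A 1 * ?C 1)" unfolding m_def by simp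
  hence mnz: "m \<noteq> 0" using nz1 by auto
  define g where "g = (\<lambda>i. if i = n then rot m else if i \<in> {1..n-1} then rot (1 / (m * ?A i)) else rot 1)"
  have gN: "g \<in> Nprime n" unfolding Nprime_def g_def using mnz nzj by (auto intro!: rot_SO2)
  have "actX n g x j = sig n (Phi n x) j" if j: "j \<in> {1..n-1}" for j
  proof -
    have jn: "j \<noteq> n" using j by auto
    have lnz: "1 / (m * ?A j) \<noteq> 0" using mnz nzj[OF j] by auto
    have ax: "actX n g x j = rot (1 / (m * ?A j)) ** x j ** matrix_inv (rot m)"
      unfolding actX_in[OF j] g_def using j jn by simp
    have bc: "?B j * ?C j = 2 * (Phi n x (j-1) + Phi n x (n+j-2))"
      unfolding Phi_t[OF j] Phi_d[OF j] tt_iso delta_iso by (simp add: field_simps)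
    have ae: "?A j * ?E j = 2 * (Phi n x (j-1) - Phi n x (n+j-2))"
      unfolding Phi_t[OF j] Phi_d[OF j] tt_iso delta_iso by (simp add: field_simps)
    have U: "Uf n (Phi n x) j = - (?A j * ?C j) / (?A 1 * ?C 1)"
    proof (cases "j = 1")
      case True thus ?thesis using nz1 by (simp add: Uf_def)
    next
      case False hence j2: "j \<in> {2..n-1}" using j by auto
      show ?thesis using False unfolding Uf_def Phi_u[OF j2] ut_iso[OF D] by simp
    qed
    have IU: "invU n (Phi n x) j = - (?A 1 * ?C 1) / (?A j * ?C j)"
    proof (cases "j = 1")
      case True thus ?thesis using nz1 by (simp add: invU_def)
    next
      case False hence j2: "j \<in> {2..n-1}" using j by auto
      show ?thesis using False unfolding invU_def Phi_u[OF j2] ut_iso[OF D] by simp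
    qed
    have m2': "m * m = 1 / (?A 1 * ?C 1)" using m2 by (simp add: power2_eq_square)
    have sp: "Phi n x (j-1) + Phi n x (n+j-2) = ?B j * ?C j / 2" using bc by simp
    have sm: "Phi n x (j-1) - Phi n x (n+j-2) = ?A j * ?E j / 2" using ae by simp
    have f1: "1 / (m * ?A j) / m = (?A 1 * ?C 1) / ?A j"
    proof -
      have "1 / (m * ?A j) / m = 1 / ((m * m) * ?A j)" by (simp add: field_simps)
      also have "\<dots> = (?A 1 * ?C 1) / ?A j" unfolding m2' using nz1 by simp
      finally show ?thesis .
    qed
    have f2: "m / (1 / (m * ?A j)) = ?A j / (?A 1 * ?C 1)"
    proof -
      have "m / (1 / (m * ?A j)) = (m * m) * ?A j" by (simp add: field_simps)
      also have "\<dots> = ?A j / (?A 1 * ?C 1)" unfolding m2' by simp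
      finally show ?thesis .
    qed
    show ?thesis unfolding iso_eq ax iso_act[OF lnz mnz] sig_iso[OF j]
    proof (intro conjI)
      show "1 / (m * ?A j) * m * ?A j = 1" using mnz nzj[OF j] by simp
      show "1 / (m * ?A j) / m * ?B j = -2 * (Phi n x (j-1) + Phi n x (n+j-2)) * invU n (Phi n x) j"
        unfolding IU sp f1 using nzj[OF j] nz1 by (simp add: field_simps)
      show "m / (1 / (m * ?A j)) * ?C j = - Uf n (Phi n x) j"
        unfolding U f2 using nzj[OF j] nz1 by (simp add: field_simps)
      show "?E j / (1 / (m * ?A j) * m) = 2 * (Phi n x (j-1) - Phi n x (n+j-2))"
        unfolding sm using mnz nzj[OF j] by (simp add: field_simps)
    qed
  qed
  thus ?thesis using gN by blast
qed



definition RatF :: "nat \<Rightarrow> nat set \<Rightarrow> ((nat \<Rightarrow> complex) \<Rightarrow> complex) \<Rightarrow> bool" where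
  "RatF N K f \<longleftrightarrow> (\<exists>F\<in>polyfun (coordsC N). \<exists>m. \<forall>y. (\<Prod>k\<in>K. y k) \<noteq> 0 \<longrightarrow> f y = F y / (\<Prod>k\<in>K. y k) ^ m)"

lemma coordC_in: "k < N \<Longrightarrow> (\<lambda>y. y k) \<in> polyfun (coordsC N)"
  by (rule pf_coord) (auto simp: coordsC_def)

lemma Dp_pf: "finite K \<Longrightarrow> K \<subseteq> {..<N} \<Longrightarrow> (\<lambda>y. \<Prod>k\<in>K. y k) \<in> polyfun (coordsC N)"
  by (rule pf_prod) (auto intro: coordC_in)

lemma RatF_pf: "F \<in> polyfun (coordsC N) \<Longrightarrow> RatF N K F"
  unfolding RatF_def by (intro bexI[of _ F] exI[of _ 0]) auto

lemma RatF_const: "RatF N K (\<lambda>y. c)"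
  by (rule RatF_pf) (rule pf_const)

lemma RatF_coord: "k < N \<Longrightarrow> RatF N K (\<lambda>y. y k)"
  by (rule RatF_pf) (rule coordC_in)

context
  fixes N :: nat and K :: "nat set" assumes fin: "finite K" and sub: "K \<subseteq> {..<N}"
begin

lemma RatF_add: assumes "RatF N K f" "RatF N K g" shows "RatF N K (\<lambda>y. f y + g y)"
proof -
  obtain F m where F: "F \<in> polyfun (coordsC N)" "\<forall>y. (\<Prod>k\<in>K. y k) \<noteq> 0 \<longrightarrow> f y = F y / (\<Prod>k\<in>K. y k) ^ m"
    using assms(1) unfolding RatF_def by blast
  obtain G l where G: "G \<in> polyfun (coordsC N)" "\<forall>y. (\<Prod>k\<in>K. y k) \<noteq> 0 \<longrightarrow> g y = G y / (\<Prod>k\<in>K. y k) ^ l"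
    using assms(2) unfolding RatF_def by blast
  have pd: "(\<lambda>y. \<Prod>k\<in>K. y k) \<in> polyfun (coordsC N)" using Dp_pf[OF fin sub] .
  show ?thesis unfolding RatF_def
  proof (intro bexI[of _ "\<lambda>y. F y * (\<Prod>k\<in>K. y k) ^ l + G y * (\<Prod>k\<in>K. y k) ^ m"] exI[of _ "m + l"] allI impI)
    fix y :: "nat \<Rightarrow> complex" assume d: "(\<Prod>k\<in>K. y k) \<noteq> 0"
    have f: "f y = F y / (\<Prod>k\<in>K. y k) ^ m" and g: "g y = G y / (\<Prod>k\<in>K. y k) ^ l" using F(2) G(2) d by auto
    show "f y + g y = (F y * (\<Prod>k\<in>K. y k) ^ l + G y * (\<Prod>k\<in>K. y k) ^ m) / (\<Prod>k\<in>K. y k) ^ (m + l)"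
      unfolding f g using d by (simp add: field_simps power_add)
  next
    show "(\<lambda>y. F y * (\<Prod>k\<in>K. y k) ^ l + G y * (\<Prod>k\<in>K. y k) ^ m) \<in> polyfun (coordsC N)"
      using F(1) G(1) pd by (intro pf_add pf_mult pf_power)
  qed
qed

lemma RatF_mult: assumes "RatF N K f" "RatF N K g" shows "RatF N K (\<lambda>y. f y * g y)"
proof -
  obtain F m where F: "F \<in> polyfun (coordsC N)" "\<forall>y. (\<Prod>k\<in>K. y k) \<noteq> 0 \<longrightarrow> f y = F y / (\<Prod>k\<in>K. y k) ^ m"
    using assms(1) unfolding RatF_def by blast
  obtain G l where G: "G \<in> polyfun (coordsC N)" "\<forall>y. (\<Prod>k\<in>K. y k) \<noteq> 0 \<longrightarrow> g y = G y / (\<Prod>k\<in>K. y k) ^ l"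
    using assms(2) unfolding RatF_def by blast
  show ?thesis unfolding RatF_def
  proof (intro bexI[of _ "\<lambda>y. F y * G y"] exI[of _ "m + l"] allI impI)
    fix y :: "nat \<Rightarrow> complex" assume d: "(\<Prod>k\<in>K. y k) \<noteq> 0"
    have f: "f y = F y / (\<Prod>k\<in>K. y k) ^ m" and g: "g y = G y / (\<Prod>k\<in>K. y k) ^ l" using F(2) G(2) d by auto
    show "f y * g y = (F y * G y) / (\<Prod>k\<in>K. y k) ^ (m + l)"
      unfolding f g using d by (simp add: field_simps power_add)
  next
    show "(\<lambda>y. F y * G y) \<in> polyfun (coordsC N)"
      using F(1) G(1) by (intro pf_mult)
  qed
qed

lemma RatF_inv: assumes "k0 \<in> K" shows "RatF N K (\<lambda>y. 1 / y k0)"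
  unfolding RatF_def
proof (intro bexI[of _ "\<lambda>y. \<Prod>k\<in>K-{k0}. y k"] exI[of _ 1] allI impI)
  fix y :: "nat \<Rightarrow> complex" assume d: "(\<Prod>k\<in>K. y k) \<noteq> 0"
  have e: "(\<Prod>k\<in>K. y k) = y k0 * (\<Prod>k\<in>K-{k0}. y k)" using prod.remove[OF fin assms] .
  show "1 / y k0 = (\<Prod>k\<in>K-{k0}. y k) / (\<Prod>k\<in>K. y k) ^ 1"
    using d unfolding e by (simp add: field_simps)
next
  show "(\<lambda>y. \<Prod>k\<in>K-{k0}. y k) \<in> polyfun (coordsC N)" using Dp_pf[of "K-{k0}" N] fin sub by auto
qed

lemma RatF_cmult: "RatF N K f \<Longrightarrow> RatF N K (\<lambda>y. c * f y)"
  using RatF_mult[OF RatF_const] by blast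

lemma RatF_diff: assumes "RatF N K f" "RatF N K g" shows "RatF N K (\<lambda>y. f y - g y)"
proof -
  have "RatF N K (\<lambda>y. f y + (-1) * g y)" using assms by (intro RatF_add RatF_cmult)
  thus ?thesis by simp
qed

lemma RatF_divc: "RatF N K f \<Longrightarrow> RatF N K (\<lambda>y. f y / c)"
proof -
  assume "RatF N K f"
  hence "RatF N K (\<lambda>y. (1/c) * f y)" by (rule RatF_cmult)
  thus ?thesis by simp
qed

lemma RatF_uminus: "RatF N K f \<Longrightarrow> RatF N K (\<lambda>y. - f y)"
proof -
  assume "RatF N K f"
  hence "RatF N K (\<lambda>y. (-1) * f y)" by (rule RatF_cmult)
  thus ?thesis by simp
qed

lemma RatF_comp: assumes "\<forall>c\<in>C. RatF N K (\<lambda>y. c (S y))" "f \<in> polyfun C"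
  shows "RatF N K (\<lambda>y. f (S y))"
  using assms(2)
  by (induction f rule: polyfun.induct) (auto intro: RatF_const RatF_add RatF_mult assms(1)[rule_format])

lemma RatF_mat: fixes G H :: mat2 and S :: "(nat \<Rightarrow> complex) \<Rightarrow> mat2" assumes "\<And>a b. RatF N K (\<lambda>y. S y $ a $ b)"
  shows "RatF N K (\<lambda>y. (G ** S y ** H) $ a $ b)"
proof -
  have e: "(G ** S y ** H) $ a $ b =
     (G$a$1 * S y$1$1 + G$a$2 * S y$2$1) * H$1$b + (G$a$1 * S y$1$2 + G$a$2 * S y$2$2) * H$2$b" for y
    by (simp add: matrix_matrix_mult_def sum_2)
  show ?thesis unfolding e
    by (intro RatF_add RatF_mult RatF_const assms)
qed

end



lemma part3:
  assumes n: "n \<ge> 2" and P: "P \<in> polyfun (coordsC (3*n-4))"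
    and van: "\<forall>x. Dd x \<noteq> 0 \<longrightarrow> P (Phi n x) = 0"
  shows "P y = 0"
proof -
  define N where "N = 3*n-4"
  define K where "K = {2*n-2..<3*n-4}"
  have finK: "finite K" and subK: "K \<subseteq> {..<N}" unfolding K_def N_def by auto
  have i1: "n-1 < N" "0 < N" unfolding N_def using n by auto
  define Gf where "Gf = (\<lambda>y::nat\<Rightarrow>complex. (y (n-1) ^ 2 - y 0 ^ 2) * (\<Prod>k\<in>K. y k))"
  have Gpf: "Gf \<in> polyfun (coordsC N)" unfolding Gf_def
    by (intro pf_mult pf_diff pf_power coordC_in i1 Dp_pf finK subK)
  have v: "P y = 0" if g: "Gf y \<noteq> 0" for y
  proof -
    have d: "y (n-1) ^ 2 \<noteq> y 0 ^ 2" using g unfolding Gf_def by auto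
    have pr: "(\<Prod>k\<in>K. y k) \<noteq> 0" using g unfolding Gf_def by auto
    have u: "\<forall>j\<in>{2..n-1}. y (2*n+j-4) \<noteq> 0"
    proof
      fix j assume j: "j \<in> {2..n-1}"
      have "2*n+j-4 \<in> K" using j unfolding K_def by auto
      thus "y (2*n+j-4) \<noteq> 0" using pr finK by auto
    qed
    note sg = sig_good[OF n d u]
    have "P (Phi n (sig n y)) = P y"
      by (rule polyfun_local[OF P[folded N_def]]) (use sg(2) in \<open>auto simp: coordsC_def N_def\<close>)
    thus ?thesis using van sg(1) by auto
  qed
  define y1 where "y1 = (\<lambda>k::nat. if k = n-1 then (1::complex) else if 2*n-2 \<le> k then 1 else 0)"
  have "y1 (n-1) = 1" "y1 0 = 0" unfolding y1_def using n by auto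
  moreover have "(\<Prod>k\<in>K. y1 k) = 1" unfolding K_def y1_def by (intro prod.neutral) auto
  ultimately have "Gf y1 \<noteq> 0" unfolding Gf_def by simp
  show ?thesis by (rule polyfunC_zero[OF P[folded N_def] Gpf \<open>Gf y1 \<noteq> 0\<close>]) (use v in blast)
qed

lemma actX_comp: assumes "g \<in> Nprime n" "h \<in> Nprime n"
  shows "\<exists>G\<in>Nprime n. \<forall>x. \<forall>j\<in>{1..n-1}. actX n h (actX n g x) j = actX n G x j"
proof -
  have nn: "n \<in> {1..n}" if "j \<in> {1..n-1}" for j using that by auto
  show ?thesis
  proof (cases "n = 0")
    case True thus ?thesis using assms by auto
  next
    case False hence nn: "n \<in> {1..n}" by auto
    obtain a where a: "a \<noteq> 0" "g n = rot a" using Nprime_rot[OF assms(1) nn] by auto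
    obtain b where b: "b \<noteq> 0" "h n = rot b" using Nprime_rot[OF assms(2) nn] by auto
    define G where "G = (\<lambda>i. h i ** g i)"
    have GN: "G \<in> Nprime n" unfolding Nprime_def mem_Collect_eq
    proof (intro ballI)
      fix i assume i: "i \<in> {1..n}"
      obtain c where c: "c \<noteq> 0" "g i = rot c" using Nprime_rot[OF assms(1) i] by auto
      obtain d where d: "d \<noteq> 0" "h i = rot d" using Nprime_rot[OF assms(2) i] by auto
      show "G i \<in> SO2" unfolding G_def c d using c d by (simp add: rot_mult rot_SO2)
    qed
    have "actX n h (actX n g x) j = actX n G x j" if j: "j \<in> {1..n-1}" for x j
    proof -
      have "matrix_inv (G n) = rot (1/a) ** rot (1/b)"
        unfolding G_def a b using a b by (simp add: rot_mult matrix_inv_rot mult.commute)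
      thus ?thesis unfolding actX_in[OF j] using a b
        by (simp add: G_def matrix_inv_rot matrix_mul_assoc)
    qed
    thus ?thesis using GN by blast
  qed
qed

lemma actX_inv: assumes "g \<in> Nprime n"
  shows "\<exists>h\<in>Nprime n. \<forall>x. \<forall>j\<in>{1..n-1}. actX n h (actX n g x) j = x j"
proof (cases "n = 0")
  case True thus ?thesis using assms by auto
next
  case False hence nn: "n \<in> {1..n}" by auto
  define lg where "lg = (\<lambda>i. SOME l. l \<noteq> 0 \<and> g i = rot l)"
  define h where "h = (\<lambda>i. rot (1 / lg i))"
  have hi: "\<exists>l. h i = rot (1/l) \<and> g i = rot l \<and> l \<noteq> 0" if "i \<in> {1..n}" for i
  proof -
    have "lg i \<noteq> 0 \<and> g i = rot (lg i)" unfolding lg_def by (rule someI_ex) (rule Nprime_rot[OF assms that(1)])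
    thus ?thesis unfolding h_def by blast
  qed
  have hN: "h \<in> Nprime n" unfolding Nprime_def mem_Collect_eq
  proof (intro ballI)
    fix i assume "i \<in> {1..n}"
    then obtain l where "h i = rot (1/l)" "l \<noteq> 0" using hi by blast
    thus "h i \<in> SO2" by (simp add: rot_SO2)
  qed
  have "actX n h (actX n g x) j = x j" if j: "j \<in> {1..n-1}" for x j
  proof -
    have jj: "j \<in> {1..n}" using j by auto
    obtain a where a: "h j = rot (1/a)" "g j = rot a" "a \<noteq> 0" using hi[OF jj] by blast
    obtain b where b: "h n = rot (1/b)" "g n = rot b" "b \<noteq> 0" using hi[OF nn] by blast
    have "actX n h (actX n g x) j = (rot (1/a) ** rot a) ** x j ** (rot (1/b) ** rot b)"
      unfolding actX_in[OF j] a b using a b by (simp add: matrix_inv_rot matrix_mul_assoc)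
    also have "\<dots> = x j" using a b by (simp add: rot_mult rot_1 del: One_nat_def)
    finally show ?thesis .
  qed
  thus ?thesis using hN by blast
qed

lemma coordX_in: "j \<in> {1..n-1} \<Longrightarrow> (\<lambda>x. x j $ a $ b) \<in> polyfun (coordsX n)"
  by (rule pf_coord) (auto simp: coordsX_def)

lemma pf_iso: assumes "j \<in> {1..n-1}" shows
  "(\<lambda>x. isoA (x j)) \<in> polyfun (coordsX n)" "(\<lambda>x. isoB (x j)) \<in> polyfun (coordsX n)"
  "(\<lambda>x. isoC (x j)) \<in> polyfun (coordsX n)" "(\<lambda>x. isoE (x j)) \<in> polyfun (coordsX n)"
  unfolding isoA_def isoB_def isoC_def isoE_def
  by (intro pf_add pf_diff pf_cmult coordX_in assms)+



lemma RatF_fromIso: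
  assumes fin: "finite K" and sub: "K \<subseteq> {..<N}"
    and "RatF N K A" "RatF N K B" "RatF N K C" "RatF N K E"
  shows "RatF N K (\<lambda>y. fromIso (A y) (B y) (C y) (E y) $ a $ b)"
proof -
  have cs: "a = 1 \<or> a = 2" "b = 1 \<or> b = 2" using exhaust_2 by auto
  note R = RatF_divc[OF fin sub] RatF_add[OF fin sub] RatF_diff[OF fin sub] RatF_uminus[OF fin sub] assms(3-6)
  show ?thesis using cs
    by (elim disjE) (simp_all only: fromIso_def m2_simps, (intro R)+)
qed

lemma Dp_Phi:
  assumes n: "n \<ge> 2"
  shows "(\<Prod>k\<in>{2*n-2..<3*n-4}. Phi n x k) \<noteq> 0 \<longleftrightarrow> (\<forall>j\<in>{2..n-1}. ut x j \<noteq> 0)"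
proof -
  have "(\<Prod>k\<in>{2*n-2..<3*n-4}. Phi n x k) \<noteq> 0 \<longleftrightarrow> (\<forall>k\<in>{2*n-2..<3*n-4}. Phi n x k \<noteq> 0)"
    by simp
  also have "\<dots> \<longleftrightarrow> (\<forall>j\<in>{2..n-1}. ut x j \<noteq> 0)"
  proof
    assume h: "\<forall>k\<in>{2*n-2..<3*n-4}. Phi n x k \<noteq> 0"
    show "\<forall>j\<in>{2..n-1}. ut x j \<noteq> 0"
    proof
      fix j assume j: "j \<in> {2..n-1}"
      have "2*n+j-4 \<in> {2*n-2..<3*n-4}" using j by auto
      thus "ut x j \<noteq> 0" using h Phi_u[OF j] by metis
    qed
  next
    assume h: "\<forall>j\<in>{2..n-1}. ut x j \<noteq> 0"
    show "\<forall>k\<in>{2*n-2..<3*n-4}. Phi n x k \<noteq> 0"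
    proof
      fix k assume k: "k \<in> {2*n-2..<3*n-4}"
      have j: "k-(2*n-2)+2 \<in> {2..n-1}" using k by auto
      have e: "2*n + (k-(2*n-2)+2) - 4 = k" using k n by auto
      show "Phi n x k \<noteq> 0" using h j Phi_u[OF j, of x] unfolding e by metis
    qed
  qed
  finally show ?thesis .
qed

lemma part4:
  assumes n: "n \<ge> 2" and p: "p \<in> polyfun (coordsX n)" and q: "q \<in> polyfun (coordsX n)"
    and x0: "q x0 \<noteq> 0"
    and inv: "\<forall>g\<in>Nprime n. \<forall>x. p (actX n g x) * q x = p x * q (actX n g x)"
  shows "\<exists>P\<in>polyfun (coordsC (3*n-4)). \<exists>Q\<in>polyfun (coordsC (3*n-4)).
             (\<exists>x. Dd x \<noteq> 0 \<and> Q (Phi n x) \<noteq> 0) \<and>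
             (\<forall>x. Dd x \<noteq> 0 \<longrightarrow> q x \<noteq> 0 \<longrightarrow> Q (Phi n x) \<noteq> 0 \<longrightarrow>
                  p x * Q (Phi n x) = P (Phi n x) * q x)"
proof -
  define N where "N = 3*n-4"
  define K where "K = {2*n-2..<3*n-4}"
  have finK: "finite K" and subK: "K \<subseteq> {..<N}" unfolding K_def N_def by auto
  define D where "D = (\<lambda>y::nat\<Rightarrow>complex. \<Prod>k\<in>K. y k)"
  have Dpf: "D \<in> polyfun (coordsC N)" unfolding D_def by (rule Dp_pf[OF finK subK])
  have o: "1 \<in> {1..n-1}" using n by auto
  define r where "r = (\<lambda>x::ptX. (-1/4) * ((isoA (x 1) * isoE (x 1)) * (isoB (x 1) * isoC (x 1)))
                         * (\<Prod>j\<in>{2..n-1}. isoA (x j) * isoC (x j)))"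
  have rD: "r x = Dd x * (\<Prod>j\<in>{2..n-1}. isoA (x j) * isoC (x j))" for x
    unfolding r_def Dd_iso by simp
  have rpf: "r \<in> polyfun (coordsX n)" unfolding r_def
    by (intro pf_mult pf_cmult pf_prod pf_iso o finite_atLeastAtMost) auto
  define x1 where "x1 = (\<lambda>j::nat. m2 1 0 0 0)"
  have "r x1 \<noteq> 0" unfolding r_def x1_def by (simp add: iso_m2)
  then obtain xs where xs: "q xs \<noteq> 0" "r xs \<noteq> 0" using polyfunX_both_nonzero[OF q rpf x0] by blast
  have Dxs: "Dd xs \<noteq> 0" and pxs: "\<forall>j\<in>{2..n-1}. isoA (xs j) * isoC (xs j) \<noteq> 0"
    using xs(2) unfolding rD by auto
  have uxs: "\<forall>j\<in>{2..n-1}. ut xs j \<noteq> 0"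
  proof
    fix j assume "j \<in> {2..n-1}"
    moreover have "isoA (xs 1) * isoC (xs 1) \<noteq> 0" using Dxs unfolding Dd_iso by auto
    ultimately show "ut xs j \<noteq> 0" using pxs unfolding ut_iso[OF Dxs] by auto
  qed
  obtain gs where gs: "gs \<in> Nprime n" "\<forall>j\<in>{1..n-1}. actX n gs xs j = sig n (Phi n xs) j"
    using normal_form[OF n Dxs uxs] by blast
  obtain h where h: "h \<in> Nprime n" "\<forall>x. \<forall>j\<in>{1..n-1}. actX n h (actX n gs x) j = x j"
    using actX_inv[OF gs(1)] by blast
  define sh where "sh = (\<lambda>y. actX n h (sig n y))"
  have Rc: "\<forall>c\<in>coordsX n. RatF N K (\<lambda>y. c (sh y))"
  proof
    fix c assume "c \<in> coordsX n"
    then obtain j a b where c: "c = (\<lambda>x. x j $ a $ b)" and j: "j \<in> {1..n-1}" unfolding coordsX_def by blast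
    have RinvU: "RatF N K (\<lambda>y. invU n y j)"
    proof (cases "j = 1")
      case True thus ?thesis by (simp add: invU_def RatF_const)
    next
      case False
      hence "2*n+j-4 \<in> K" using j unfolding K_def by auto
      thus ?thesis using False by (simp add: invU_def RatF_inv[OF finK subK])
    qed
    have RUf: "RatF N K (\<lambda>y. Uf n y j)"
    proof (cases "j = 1")
      case True thus ?thesis by (simp add: Uf_def RatF_const)
    next
      case False
      hence "2*n+j-4 < N" using j unfolding N_def by auto
      thus ?thesis using False by (simp add: Uf_def RatF_coord)
    qed
    have i1: "j - 1 < N" "n+j-2 < N" using j n unfolding N_def by auto
    have Rs: "RatF N K (\<lambda>y. sig n y j $ a' $ b')" for a' b'
    proof -
      have "RatF N K (\<lambda>y. fromIso 1 (-2*(y (j-1) + y (n+j-2)) * invU n y j) (- Uf n y j) (2*(y (j-1) - y (n+j-2))) $ a' $ b')"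
        by (intro RatF_fromIso finK subK RatF_mult[OF finK subK] RatF_add[OF finK subK]
            RatF_diff[OF finK subK] RatF_uminus[OF finK subK] RatF_const RatF_coord i1 RinvU RUf)
      thus ?thesis unfolding sig_def using j by simp
    qed
    have "RatF N K (\<lambda>y. (h j ** sig n y j ** matrix_inv (h n)) $ a $ b)"
      by (rule RatF_mat[OF finK subK Rs])
    thus "RatF N K (\<lambda>y. c (sh y))" unfolding c sh_def actX_in[OF j] .
  qed
  obtain Fp mp where Fp: "Fp \<in> polyfun (coordsC N)" "\<forall>y. D y \<noteq> 0 \<longrightarrow> p (sh y) = Fp y / D y ^ mp"
    using RatF_comp[OF finK subK Rc p] unfolding RatF_def D_def by blast
  obtain Fq mq where Fq: "Fq \<in> polyfun (coordsC N)" "\<forall>y. D y \<noteq> 0 \<longrightarrow> q (sh y) = Fq y / D y ^ mq"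
    using RatF_comp[OF finK subK Rc q] unfolding RatF_def D_def by blast
  define P where "P = (\<lambda>y. Fp y * D y ^ mq * D y)"
  define Q where "Q = (\<lambda>y. Fq y * D y ^ mp * D y)"
  have Ppf: "P \<in> polyfun (coordsC (3*n-4))" unfolding P_def N_def[symmetric]
    by (intro pf_mult pf_power Fp(1) Dpf)
  have Qpf: "Q \<in> polyfun (coordsC (3*n-4))" unfolding Q_def N_def[symmetric]
    by (intro pf_mult pf_power Fq(1) Dpf)
  have DPhi: "D (Phi n x) \<noteq> 0 \<longleftrightarrow> (\<forall>j\<in>{2..n-1}. ut x j \<noteq> 0)" for x
    unfolding D_def K_def using Dp_Phi[OF n] .
  have loc: "f (sh (Phi n x)) = f (actX n G x)"
    if f: "f \<in> polyfun (coordsX n)" and gx: "\<forall>j\<in>{1..n-1}. actX n gx x j = sig n (Phi n x) j"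
      and G: "\<forall>j\<in>{1..n-1}. actX n h (actX n gx x) j = actX n G x j" for f x gx G
  proof (rule polyfun_local[OF f], rule ballI)
    fix c assume "c \<in> coordsX n"
    then obtain j a b where c: "c = (\<lambda>x. x j $ a $ b)" and j: "j \<in> {1..n-1}" unfolding coordsX_def by blast
    have e1: "sig n (Phi n x) j = actX n gx x j" using gx j by simp
    have "sh (Phi n x) j = actX n h (actX n gx x) j"
      unfolding sh_def by (simp only: actX_in[OF j] e1)
    thus "c (sh (Phi n x)) = c (actX n G x)" unfolding c using G j by simp
  qed
  have wit: "\<exists>x. Dd x \<noteq> 0 \<and> Q (Phi n x) \<noteq> 0"
  proof (intro exI conjI)
    show "Dd xs \<noteq> 0" by (rule Dxs)
    have d: "D (Phi n xs) \<noteq> 0" using DPhi uxs by blast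
    obtain G where G: "G \<in> Nprime n" "\<forall>x. \<forall>j\<in>{1..n-1}. actX n h (actX n gs x) j = actX n G x j"
      using actX_comp[OF gs(1) h(1)] by blast
    have "q (sh (Phi n xs)) = q (actX n G xs)" by (rule loc[OF q gs(2)]) (use G in blast)
    also have "\<dots> = q xs" by (rule polyfun_local[OF q]) (use G h in \<open>auto simp: coordsX_def\<close>)
    finally have "Fq (Phi n xs) / D (Phi n xs) ^ mq \<noteq> 0" using Fq(2) d xs(1) by metis
    thus "Q (Phi n xs) \<noteq> 0" unfolding Q_def using d by simp
  qed
  have main: "p x * Q (Phi n x) = P (Phi n x) * q x"
    if D0: "Dd x \<noteq> 0" and qx: "q x \<noteq> 0" and Qx: "Q (Phi n x) \<noteq> 0" for x
  proof -
    have d: "D (Phi n x) \<noteq> 0" using Qx unfolding Q_def by auto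
    hence ux: "\<forall>j\<in>{2..n-1}. ut x j \<noteq> 0" using DPhi by blast
    obtain gx where gx: "gx \<in> Nprime n" "\<forall>j\<in>{1..n-1}. actX n gx x j = sig n (Phi n x) j"
      using normal_form[OF n D0 ux] by blast
    obtain G where G: "G \<in> Nprime n" "\<forall>x. \<forall>j\<in>{1..n-1}. actX n h (actX n gx x) j = actX n G x j"
      using actX_comp[OF gx(1) h(1)] by blast
    have pe: "p (sh (Phi n x)) = p (actX n G x)" by (rule loc[OF p gx(2)]) (use G in blast)
    have qe: "q (sh (Phi n x)) = q (actX n G x)" by (rule loc[OF q gx(2)]) (use G in blast)
    have "p (actX n G x) * q x = p x * q (actX n G x)" using inv G(1) by blast
    hence e: "Fp (Phi n x) / D (Phi n x) ^ mp * q x = p x * (Fq (Phi n x) / D (Phi n x) ^ mq)"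
      using pe qe Fp(2) Fq(2) d by metis
    let ?D = "D (Phi n x)"
    have e': "Fp (Phi n x) * q x * ?D ^ mq = p x * Fq (Phi n x) * ?D ^ mp"
      using e d by (simp add: field_simps)
    have "p x * Q (Phi n x) = (p x * Fq (Phi n x) * ?D ^ mp) * ?D" unfolding Q_def by (simp add: algebra_simps)
    also have "\<dots> = (Fp (Phi n x) * q x * ?D ^ mq) * ?D" using e' by simp
    also have "\<dots> = P (Phi n x) * q x" unfolding P_def by (simp add: algebra_simps)
    finally show ?thesis .
  qed
  show ?thesis using Ppf Qpf wit main by (intro bexI[of _ P] bexI[of _ Q] conjI allI impI) auto
qed

theorem proposition8p11:
  fixes n :: nat
  assumes "n \<ge> 2"
  shows
    \<comment> \<open>W'-invariance of the generators\<close>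
    "(\<forall>g\<in>Nprime n. \<forall>x. \<forall>j\<in>{1..n-1}.
        tt (actX n g x) j = tt x j \<and> delta (actX n g x) j = delta x j)
     \<and> (\<forall>g\<in>Nprime n. \<forall>x. Dd x \<noteq> 0 \<longrightarrow> Dd (actX n g x) \<noteq> 0 \<longrightarrow>
        (\<forall>j\<in>{2..n-1}. ut (actX n g x) j = ut x j))
     \<comment> \<open>algebraic independence\<close>
     \<and> (\<forall>P\<in>polyfun (coordsC (3*n-4)).
          (\<forall>x. Dd x \<noteq> 0 \<longrightarrow> P (Phi n x) = 0) \<longrightarrow> (\<forall>y. P y = 0))
     \<comment> \<open>they generate the field of invariant rational functions\<close>
     \<and> (\<forall>p\<in>polyfun (coordsX n). \<forall>q\<in>polyfun (coordsX n).
          (\<exists>x. q x \<noteq> 0) \<longrightarrow>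
          (\<forall>g\<in>Nprime n. \<forall>x. p (actX n g x) * q x = p x * q (actX n g x)) \<longrightarrow>
          (\<exists>P\<in>polyfun (coordsC (3*n-4)). \<exists>Q\<in>polyfun (coordsC (3*n-4)).
             (\<exists>x. Dd x \<noteq> 0 \<and> Q (Phi n x) \<noteq> 0) \<and>
             (\<forall>x. Dd x \<noteq> 0 \<longrightarrow> q x \<noteq> 0 \<longrightarrow> Q (Phi n x) \<noteq> 0 \<longrightarrow>
                  p x * Q (Phi n x) = P (Phi n x) * q x)))"
proof (intro conjI)
  show "\<forall>g\<in>Nprime n. \<forall>x. \<forall>j\<in>{1..n-1}. tt (actX n g x) j = tt x j \<and> delta (actX n g x) j = delta x j"
    using inv_part1 by blast
  show "\<forall>g\<in>Nprime n. \<forall>x. Dd x \<noteq> 0 \<longrightarrow> Dd (actX n g x) \<noteq> 0 \<longrightarrow>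
        (\<forall>j\<in>{2..n-1}. ut (actX n g x) j = ut x j)"
    using inv_part2 by blast
  show "\<forall>P\<in>polyfun (coordsC (3*n-4)).
          (\<forall>x. Dd x \<noteq> 0 \<longrightarrow> P (Phi n x) = 0) \<longrightarrow> (\<forall>y. P y = 0)"
  proof (intro ballI impI allI)
    fix P y assume "P \<in> polyfun (coordsC (3*n-4))" "\<forall>x. Dd x \<noteq> 0 \<longrightarrow> P (Phi n x) = 0"
    thus "P y = 0" by (rule part3[OF assms])
  qed
  show "\<forall>p\<in>polyfun (coordsX n). \<forall>q\<in>polyfun (coordsX n).
          (\<exists>x. q x \<noteq> 0) \<longrightarrow>
          (\<forall>g\<in>Nprime n. \<forall>x. p (actX n g x) * q x = p x * q (actX n g x)) \<longrightarrow>
          (\<exists>P\<in>polyfun (coordsC (3*n-4)). \<exists>Q\<in>polyfun (coordsC (3*n-4)).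
             (\<exists>x. Dd x \<noteq> 0 \<and> Q (Phi n x) \<noteq> 0) \<and>
             (\<forall>x. Dd x \<noteq> 0 \<longrightarrow> q x \<noteq> 0 \<longrightarrow> Q (Phi n x) \<noteq> 0 \<longrightarrow>
                  p x * Q (Phi n x) = P (Phi n x) * q x))"
  proof (intro ballI impI)
    fix p q assume p: "p \<in> polyfun (coordsX n)" and q: "q \<in> polyfun (coordsX n)"
      and ex: "\<exists>x. q x \<noteq> 0"
      and inv: "\<forall>g\<in>Nprime n. \<forall>x. p (actX n g x) * q x = p x * q (actX n g x)"
    from ex obtain x0 where x0: "q x0 \<noteq> 0" by blast
    show "\<exists>P\<in>polyfun (coordsC (3*n-4)). \<exists>Q\<in>polyfun (coordsC (3*n-4)).
             (\<exists>x. Dd x \<noteq> 0 \<and> Q (Phi n x) \<noteq> 0) \<and>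
             (\<forall>x. Dd x \<noteq> 0 \<longrightarrow> q x \<noteq> 0 \<longrightarrow> Q (Phi n x) \<noteq> 0 \<longrightarrow>
                  p x * Q (Phi n x) = P (Phi n x) * q x)"
      by (rule part4[OF assms p q x0 inv])
  qed
qed

end
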